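(* Let $R^*=\sup\{R(\theta_0,s):\theta_0\in[0,\bar\theta),\ s\in\mathcal S(\theta_0)\}$, where $R(\theta_0,s)=\int_{\theta_0}^{\bar\theta}J(\theta)s(\theta)\,dF(\theta)+v(\theta_0)(1-F(\theta_0))$, and let $$R_1=\sup_{\theta\in[0,\bar\theta)}\Big(\theta\,\tfrac{1+F(\theta)}{2}+v(\theta)\Big)\big(1-F(\theta)\big)$$ be the maximal revenue from selling a single positional good (all participants pooled at one level). Then $R_1\ge \tfrac12 R^*$. No regularity assumption on $F$ (such as monotonicity of $J$) is required.
   Context: Let $0<\bar\theta<\infty$, $\Theta=[0,\bar\theta]$, $F$ a cdf on $\Theta$ with continuous, strictly positive density $f$, $dF=f\,d\theta$, and $J(\theta)=\theta-\frac{1-F(\theta)}{f(\theta)}$. The intrinsic value $v:\Theta\to[0,\infty)$ is twice continuously differentiable with $v'\ge0$, $v''\le0$. For $\theta_0\in[0,\bar\theta)$ and bounded measurable $a,b:[\theta_0,\bar\theta]\to\mathbb R$, write $b\in\mathrm{MPS}(a)$ on $[\theta_0,\bar\theta]$ if $\int_x^{\bar\theta}b\,dF\le\int_x^{\bar\theta}a\,dF$ for all $x\in[\theta_0,\bar\theta]$, with equality at $x=\theta_0$. Let $\mathcal S(\theta_0)$ be the set of nondecreasing $s:[\theta_0,\bar\theta]\to[0,1]$ with $s\in\mathrm{MPS}(F)$ on $[\theta_0,\bar\theta]$. $R(\theta_0,s)$ is the seller's expected revenue from the mechanism with participation cutoff $\theta_0$ and interim status $s$, where a buyer of type $\theta$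 paying $p$ for status $\sigma$ gets $\theta\sigma-p+v(\theta)$. *)

theory Defs
  imports "HOL-Analysis.Analysis"
begin

definition Jv :: "(real \<Rightarrow> real) \<Rightarrow> (real \<Rightarrow> real) \<Rightarrow> real \<Rightarrow> real" where
  "Jv F f \<theta> = \<theta> - (1 - F \<theta>) / f \<theta>"

definition MPS :: "real \<Rightarrow> (real \<Rightarrow> real) \<Rightarrow> real \<Rightarrow> (real \<Rightarrow> real) \<Rightarrow> (real \<Rightarrow> real) \<Rightarrow> bool" where
  "MPS \<theta>bar f \<theta>0 b a \<longleftrightarrow>
     (\<forall>x\<in>{\<theta>0..\<theta>bar}. integral {x..\<theta>bar} (\<lambda>t. b t * f t) \<le> integral {x..\<theta>bar} (\<lambda>t. a t * f t))
     \<and> integral {\<theta>0..\<theta>bar} (\<lambda>t. b t * f t) = integral {\<theta>0..\<theta>bar} (\<lambda>t. a t * f t)"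

definition Sset :: "real \<Rightarrow> (real \<Rightarrow> real) \<Rightarrow> (real \<Rightarrow> real) \<Rightarrow> real \<Rightarrow> (real \<Rightarrow> real) set" where
  "Sset \<theta>bar F f \<theta>0 = {s. mono_on {\<theta>0..\<theta>bar} s \<and> (\<forall>t\<in>{\<theta>0..\<theta>bar}. 0 \<le> s t \<and> s t \<le> 1)
                          \<and> MPS \<theta>bar f \<theta>0 s F}"

definition Rev :: "real \<Rightarrow> (real \<Rightarrow> real) \<Rightarrow> (real \<Rightarrow> real) \<Rightarrow> (real \<Rightarrow> real) \<Rightarrow> real \<Rightarrow> (real \<Rightarrow> real) \<Rightarrow> real" where
  "Rev \<theta>bar F f v \<theta>0 s = integral {\<theta>0..\<theta>bar} (\<lambda>t. Jv F f t * s t * f t) + v \<theta>0 * (1 - F \<theta>0)"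

definition Rstar :: "real \<Rightarrow> (real \<Rightarrow> real) \<Rightarrow> (real \<Rightarrow> real) \<Rightarrow> (real \<Rightarrow> real) \<Rightarrow> real" where
  "Rstar \<theta>bar F f v = Sup {Rev \<theta>bar F f v \<theta>0 s | \<theta>0 s. \<theta>0 \<in> {0..<\<theta>bar} \<and> s \<in> Sset \<theta>bar F f \<theta>0}"

definition R1 :: "real \<Rightarrow> (real \<Rightarrow> real) \<Rightarrow> (real \<Rightarrow> real) \<Rightarrow> real" where
  "R1 \<theta>bar F v = (SUP \<theta>\<in>{0..<\<theta>bar}. (\<theta> * (1 + F \<theta>) / 2 + v \<theta>) * (1 - F \<theta>))"

end

theory Submission
  imports Defs
begin

theorem proposition2:
  fixes \<theta>bar :: real and F f v v' v'' :: "real \<Rightarrow> real"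
  assumes "0 < \<theta>bar"
    and "continuous_on {0..\<theta>bar} f"
    and "\<And>t. t \<in> {0..\<theta>bar} \<Longrightarrow> 0 < f t"
    and "\<And>x. x \<in> {0..\<theta>bar} \<Longrightarrow> F x = integral {0..x} f"
    and "F \<theta>bar = 1"
    and "\<And>t. t \<in> {0..\<theta>bar} \<Longrightarrow> 0 \<le> v t"
    and "\<And>t. t \<in> {0..\<theta>bar} \<Longrightarrow> (v has_real_derivative v' t) (at t within {0..\<theta>bar})"
    and "\<And>t. t \<in> {0..\<theta>bar} \<Longrightarrow> (v' has_real_derivative v'' t) (at t within {0..\<theta>bar})"
    and "continuous_on {0..\<theta>bar} v''"
    and "\<And>t. t \<in> {0..\<theta>bar} \<Longrightarrow> 0 \<le> v' t"
    and "\<And>t. t \<in> {0..\<theta>bar} \<Longrightarrow> v'' t \<le> 0"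
  shows "R1 \<theta>bar F v \<ge> Rstar \<theta>bar F f v / 2"
proof -
  note tb = assms(1) and fc = assms(2) and fpos = assms(3) and Fdef = assms(4) and F1 = assms(5)
  note vnn = assms(6) and vd = assms(7) and v'nn = assms(10)
  define T where "T = {0..\<theta>bar}"
  have Fd: "(F has_real_derivative f t) (at t within T)" if "t \<in> T" for t
  proof -
    have "((\<lambda>x. integral {0..x} f) has_real_derivative f t) (at t within {0..\<theta>bar})"
      using integral_has_real_derivative[OF fc] that T_def by blast
    then show ?thesis
      using has_field_derivative_transform_within[of "\<lambda>x. integral {0..x} f" "f t" t T 1 F]
        that Fdef T_def by auto
  qed
  have Fcont: "continuous_on T F" using DERIV_continuous_on[OF Fd] by blast
  have vcont: "continuous_on T v" using DERIV_continuous_on[of T v v'] vd T_def by blast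
  have fint: "f integrable_on {a..b}" if "{a..b} \<subseteq> T" for a b
    using integrable_continuous_interval[OF continuous_on_subset[OF fc]] that T_def by blast
  have Fmono: "F x \<le> F y" if "x \<in> T" "y \<in> T" "x \<le> y" for x y
  proof -
    have "integral {0..x} f \<le> integral {0..y} f"
      by (rule integral_subset_le) (use that T_def fint fpos in \<open>auto intro!: less_imp_le\<close>)
    then show ?thesis using that Fdef T_def by simp
  qed
  have F01: "0 \<le> F x \<and> F x \<le> 1" if "x \<in> T" for x
    using Fmono[of 0 x] Fmono[of x \<theta>bar] that T_def F1 tb Fdef[of 0] by auto
  have vmono: "v x \<le> v y" if "x \<in> T" "y \<in> T" "x \<le> y" for x y
  proof -
    have "(v' has_integral (v y - v x)) {x..y}"
      apply (rule fundamental_theorem_of_calculus[OF that(3)])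
      apply (rule has_vector_derivative_within_subset[of _ _ _ T])
      using vd that T_def by (auto simp: has_real_derivative_iff_has_vector_derivative[symmetric])
    then show ?thesis
      using has_integral_nonneg[of v' "v y - v x" "{x..y}"] v'nn that T_def by auto
  qed
  define m where "m t = t * (1 - F t)" for t
  define h where "h t = Jv F f t * f t" for t
  have hm: "h t = t * f t - (1 - F t)" if "t \<in> T" for t
    using fpos[of t] that T_def unfolding h_def Jv_def by (auto simp: field_simps)
  have md: "((\<lambda>t. - m t) has_vector_derivative h t) (at t within T)" if "t \<in> T" for t
  proof -
    have "((\<lambda>t. - (t * (1 - F t))) has_real_derivative - (1 * (1 - F t) + t * (0 - f t))) (at t within T)"
    proof -
      have d1: "((\<lambda>t. 1 - F t) has_real_derivative (0 - f t)) (at t within T)"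
        by (intro DERIV_diff DERIV_const Fd that)
      have "((\<lambda>t. t * (1 - F t)) has_real_derivative 1 * (1 - F t) + t * (0 - f t)) (at t within T)"
        using DERIV_mult[OF DERIV_ident d1] by (simp add: mult.commute)
      then show ?thesis by (rule DERIV_minus)
    qed
    moreover have "- (1 * (1 - F t) + t * (0 - f t)) = h t" using hm[OF that] by (simp add: algebra_simps)
    ultimately show ?thesis unfolding has_real_derivative_iff_has_vector_derivative[symmetric] m_def
      by simp
  qed
  have hint: "(h has_integral (m a - m c)) {a..c}" if "a \<le> c" "{a..c} \<subseteq> T" for a c
  proof -
    have "(h has_integral (- m c - - m a)) {a..c}"
      apply (rule fundamental_theorem_of_calculus[OF that(1)])
      apply (rule has_vector_derivative_within_subset[of _ _ _ T])
      using md that by auto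
    then show ?thesis by simp
  qed
  define g where "g t = (t * (1 + F t) / 2 + v t) * (1 - F t)" for t
  have gcont: "continuous_on T g" unfolding g_def
    by (intro continuous_intros Fcont vcont) auto
  have "bdd_above (g ` T)"
    by (rule bounded_imp_bdd_above, rule compact_imp_bounded, rule compact_continuous_image[OF gcont])
       (simp add: T_def)
  then have bdd: "bdd_above (g ` {0..<\<theta>bar})" by (rule bdd_above_mono) (auto simp: T_def)
  have R1eq: "R1 \<theta>bar F v = (SUP \<theta>\<in>{0..<\<theta>bar}. g \<theta>)" unfolding R1_def g_def by simp
  have gle: "g x \<le> R1 \<theta>bar F v" if "x \<in> {0..<\<theta>bar}" for x
    unfolding R1eq by (rule cSUP_upper[OF that bdd])
  have mnn: "0 \<le> m x" if "x \<in> T" for x using F01[OF that] that T_def unfolding m_def by auto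
  have key: "m x + v a * (1 - F a) \<le> 2 * R1 \<theta>bar F v" if a: "a \<in> {0..<\<theta>bar}" and x: "x \<in> {a..\<theta>bar}" for a x
  proof -
    have aT: "a \<in> T" and xT: "x \<in> T" using a x T_def by auto
    have Va: "0 \<le> v a * (1 - F a)" using vnn[of a] F01[OF aT] aT T_def by auto
    show ?thesis
    proof (cases "m x \<le> v a * (1 - F a)")
      case True
      have "0 \<le> a * (1 + F a) / 2 * (1 - F a)" using F01[OF aT] a by auto
      then have "v a * (1 - F a) \<le> g a" unfolding g_def by (simp add: algebra_simps)
      with gle[OF a] True show ?thesis by linarith
    next
      case False
      have "x \<noteq> \<theta>bar" using False Va F1 unfolding m_def by auto
      then have x': "x \<in> {0..<\<theta>bar}" using x a by auto
      have Fax: "F a \<le> F x" using Fmono[OF aT xT] x by auto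
      have vax: "v a \<le> v x" using vmono[OF aT xT] x by auto
      have Fx: "0 \<le> F x" "F x \<le> 1" using F01[OF xT] by auto
      have va: "0 \<le> v a" using vnn[of a] aT T_def by auto
      have e1: "2 * g x = m x * (1 + F x) + 2 * v x * (1 - F x)" unfolding g_def m_def by (simp add: field_simps)
      have e2: "v x * (1 - F x) \<ge> v a * (1 - F x)" using vax Fx by (simp add: mult_right_mono)
      have e3: "m x * F x \<ge> v a * (1 - F a) * F x" using False Fx by (simp add: mult_right_mono)
      have e4: "0 \<le> v a * ((1 - F x) * (1 + F a))" using va Fx F01[OF aT] by simp
      have "m x + v a * (1 - F a) \<le> 2 * g x"
        using e1 e2 e3 e4 by (simp add: algebra_simps)
      with gle[OF x'] show ?thesis by linarith
    qed
  qed
  have core: "Rev \<theta>bar F f v a s \<le> 2 * R1 \<theta>bar F v" if a: "a \<in> {0..<\<theta>bar}" and sS: "s \<in> Sset \<theta>bar F f a" for a s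
  proof -
    have smono: "mono_on {a..\<theta>bar} s" and s01: "\<And>t. t \<in> {a..\<theta>bar} \<Longrightarrow> 0 \<le> s t \<and> s t \<le> 1"
      using sS unfolding Sset_def by auto
    have sub: "{a..\<theta>bar} \<subseteq> T" using a T_def by auto
    have hi: "h integrable_on {a..\<theta>bar}" using hint[of a \<theta>bar] sub a by (auto intro: has_integral_integrable)
    obtain c where c: "c \<in> {a..\<theta>bar}"
      and ceq: "integral {a..\<theta>bar} (\<lambda>x. s x * h x) = s a * integral {a..c} h + s \<theta>bar * integral {c..\<theta>bar} h"
      apply (rule second_mean_value_theorem[OF hi, of s])
      using a apply simp
      using smono apply (simp add: mono_on_def)
      by blast
    have i1: "integral {a..c} h = m a - m c" by (rule integral_unique, rule hint) (use c sub in auto)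
    have i2: "integral {c..\<theta>bar} h = m c - m \<theta>bar" by (rule integral_unique, rule hint) (use c sub in auto)
    have mb: "m \<theta>bar = 0" unfolding m_def using F1 by simp
    have "(\<lambda>t. Jv F f t * s t * f t) = (\<lambda>x. s x * h x)" unfolding h_def by (auto simp: fun_eq_iff)
    then have I: "integral {a..\<theta>bar} (\<lambda>t. Jv F f t * s t * f t) = s a * m a + (s \<theta>bar - s a) * m c"
      using ceq i1 i2 mb by (simp add: algebra_simps)
    define M where "M = max (m a) (m c)"
    have sa: "0 \<le> s a" "s a \<le> s \<theta>bar" "s \<theta>bar \<le> 1"
      using s01[of a] s01[of \<theta>bar] a mono_onD[OF smono, of a \<theta>bar] by auto
    have Mnn: "0 \<le> M" using mnn[of a] a T_def M_def by auto
    have "s a * m a \<le> s a * M" using sa M_def by (simp add: mult_left_mono)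
    moreover have "(s \<theta>bar - s a) * m c \<le> (s \<theta>bar - s a) * M" using sa M_def by (simp add: mult_left_mono)
    moreover have "s \<theta>bar * M \<le> M" using sa Mnn by (simp add: mult_left_le_one_le)
    ultimately have "integral {a..\<theta>bar} (\<lambda>t. Jv F f t * s t * f t) \<le> M" using I by (simp add: algebra_simps)
    moreover have "M + v a * (1 - F a) \<le> 2 * R1 \<theta>bar F v"
      using key[OF a, of a] key[OF a, of c] a c M_def by auto
    ultimately show ?thesis unfolding Rev_def by linarith
  qed
  have FS: "F \<in> Sset \<theta>bar F f 0"
    unfolding Sset_def MPS_def using Fmono F01 T_def by (auto intro!: mono_onI)
  define X where "X = {Rev \<theta>bar F f v \<theta>0 s | \<theta>0 s. \<theta>0 \<in> {0..<\<theta>bar} \<and> s \<in> Sset \<theta>bar F f \<theta>0}"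
  have X0: "Rev \<theta>bar F f v 0 F \<in> X"
    unfolding X_def using FS tb by (intro CollectI exI[of _ 0] exI[of _ F]) simp
  have "Rstar \<theta>bar F f v \<le> 2 * R1 \<theta>bar F v"
    unfolding Rstar_def X_def[symmetric]
  proof (rule cSup_least)
    show "X \<noteq> {}" using X0 by force
  next
    fix x assume "x \<in> X"
    then obtain \<theta>0 s where "x = Rev \<theta>bar F f v \<theta>0 s" "\<theta>0 \<in> {0..<\<theta>bar}" "s \<in> Sset \<theta>bar F f \<theta>0"
      unfolding X_def by blast
    then show "x \<le> 2 * R1 \<theta>bar F v" using core by simp
  qed
  then show ?thesis by simp
qed

end
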